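(* Let $s,t,q,N$ be integers with $0\le s<q$, $1\le t<q$, $N\ge0$, $t\nmid q$ and $\gcd(t,q)=1$. Write $q=\overline qt+\widehat q$ ($1\le\widehat q<t$), $s=\overline st+\widehat s$ ($0\le\widehat s<t$). Let $S^-(s,t,q,N)=\sum_{k=0}^N\lfloor(s-kt)/q\rfloor$, $M=-\lfloor(s-Nt)/q\rfloor$, $x_M=(s+(M-1)q)/t$ and $S=-\overline q\frac{(M-1)M}2-M(N-\lfloor x_M\rfloor)$. Let $H=\{k\in\mathbb N:(\widehat s+k\widehat q)\bmod t<\widehat q\}$, $J=H\cap\{0,\dots,t-1\}=\{j_0<\dots<j_{\widehat q-1}\}$, and $S_K=\sum_{k\in K}k$. Then: (a) if $j_0\ge M$, $S^-(s,t,q,N)=S$; (b.1) if $j_0<M\le j_{\widehat q-1}$, $S^-(s,t,q,N)=S-S_K$ with $K=H\cap\{0,\dots,M-1\}$; (b.2) if $j_{\widehat q-1}<M$ and $j_0+t\ge M$, $S^-(s,t,q,N)=S-S_J$; (b.3) if $j_{\widehat q-1}<M$ and $j_0+t<M$, with $u=\lfloor(M-1)/t\rfloor$ and $K=H\cap\{ut,\dots,M-1\}$, $S^-(s,t,q,N)=S-uS_J-\widehat q\,t\frac{(u-1)u}2-S_K$.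
   Context: Here $r\bmod t$ denotes the representative of $r$ in $\{0,\dots,t-1\}$. *)

theory Defs
  imports Complex_Main
begin

definition Sminus :: "int \<Rightarrow> int \<Rightarrow> int \<Rightarrow> int \<Rightarrow> int" where
  "Sminus s t q N = (\<Sum>k\<in>{0..N}. (s - k * t) div q)"

definition Hset :: "int \<Rightarrow> int \<Rightarrow> int \<Rightarrow> nat set" where
  "Hset s t q = {k::nat. (s mod t + int k * (q mod t)) mod t < q mod t}"

definition Jset :: "int \<Rightarrow> int \<Rightarrow> int \<Rightarrow> nat set" where
  "Jset s t q = Hset s t q \<inter> {0..<nat t}"

end

theory Submission
  imports Defs
begin


lemma lemA:
  fixes s t q :: int
  assumes "0 \<le> s" "s < q" "1 \<le> t" "t < q"
  shows "Sminus s t q (int n) = - (\<Sum>i\<in>{0..<(-((s - int n*t) div q))}. (int n - (s + i*q) div t))"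
proof (induction n)
  case 0
  have "s div q = 0" using assms by (simp add: div_pos_pos_trivial)
  then show ?case by (simp add: Sminus_def)
next
  case (Suc n)
  define N where "N = int n"
  define M where "M = -((s - N*t) div q)"
  define M' where "M' = -((s - (N+1)*t) div q)"
  have q0: "q > 0" using assms by simp
  have "(s - N*t) div q \<le> (q - 1) div q"
    using assms q0 N_def by (intro zdiv_mono1) (auto intro!: add_increasing2 simp: algebra_simps)
  moreover have "(q - 1) div q = 0" using q0 by (simp add: div_pos_pos_trivial)
  ultimately have M0: "M \<ge> 0" unfolding M_def by simp
  have "(s - (N+1)*t) div q \<le> (s - N*t) div q"
    using assms q0 by (intro zdiv_mono1) (auto simp: algebra_simps)
  then have MM': "M \<le> M'" unfolding M_def M'_def by simp
  have "(s - N*t - q) div q \<le> (s - (N+1)*t) div q"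
    using assms q0 by (intro zdiv_mono1) (auto simp: algebra_simps)
  moreover have "(s - N*t - q) div q = (s - N*t) div q - 1"
    using div_add_self2[of q "s - N*t - q"] q0 by simp
  ultimately have M'M: "M' \<le> M + 1" unfolding M_def M'_def by simp
  have Sdef: "Sminus s t q (N+1) = Sminus s t q N + (s - (N+1)*t) div q"
  proof -
    have "{0..N+1} = insert (N+1) {0..N}" using N_def by auto
    then show ?thesis unfolding Sminus_def by (simp add: N_def)
  qed
  have IH: "Sminus s t q N = - (\<Sum>i\<in>{0..<M}. (N - (s + i*q) div t))"
    using Suc.IH unfolding N_def M_def by simp
  have split: "(\<Sum>i\<in>{0..<M}. (N + 1 - (s + i*q) div t)) = (\<Sum>i\<in>{0..<M}. (N - (s + i*q) div t)) + M"
  proof -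
    have "(\<Sum>i\<in>{0..<M}. (N + 1 - (s + i*q) div t)) = (\<Sum>i\<in>{0..<M}. ((N - (s + i*q) div t) + 1))"
      by (intro sum.cong) auto
    also have "\<dots> = (\<Sum>i\<in>{0..<M}. (N - (s + i*q) div t)) + M"
      using M0 by (simp add: sum.distrib)
    finally show ?thesis .
  qed
  have T: "(\<Sum>i\<in>{0..<M'}. (N + 1 - (s + i*q) div t)) = (\<Sum>i\<in>{0..<M}. (N - (s + i*q) div t)) + M'"
  proof (cases "M' = M")
    case True then show ?thesis using split by simp
  next
    case False
    then have e: "M' = M + 1" using MM' M'M by simp
    have d1: "q * ((s - N*t) div q) \<le> s - N*t" using q0
      by (metis mult.commute div_mult_mod_eq add.commute le_add_same_cancel1 pos_mod_sign)
    have d2: "s - (N+1)*t < q * ((s - (N+1)*t) div q) + q" using q0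
      by (metis div_mult_mod_eq add.commute add_less_cancel_left pos_mod_bound mult.commute)
    have l: "N*t \<le> s + M*q" using d1 unfolding M_def by (simp add: algebra_simps)
    have "(s - (N+1)*t) div q = -(M+1)" using e unfolding M'_def by simp
    then have "s - (N+1)*t < q * (-(M+1)) + q" using d2 by simp
    then have u: "s + M*q < N*t + t" by (simp add: algebra_simps)
    have "(s + M*q) div t = N"
      using l u assms by (intro int_div_pos_eq[where r="s + M*q - N*t"]) (auto simp: algebra_simps)
    moreover have "{0..<M'} = insert M {0..<M}" using e M0 by auto
    ultimately show ?thesis using split e by simp
  qed
  show ?case
    using Sdef IH T unfolding M_def M'_def N_def by (simp add: algebra_simps)
qed



lemma small_div:
  fixes r h t :: int
  assumes "0 \<le> r" "r < t" "0 \<le> h" "h < t"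
  shows "(r + h) div t = (if (r + h) mod t < h then 1 else 0)"
proof (cases "r + h < t")
  case True
  then show ?thesis using assms by (simp add: div_pos_pos_trivial mod_pos_pos_trivial)
next
  case False
  have "(r + h) div t = 1" using False assms by (intro int_div_pos_eq[where r="r+h-t"]) auto
  moreover have "(r + h) mod t = r + h - t" using False assms by (intro int_mod_pos_eq[where q=1]) auto
  ultimately show ?thesis using assms by simp
qed

lemma key:
  fixes s t q :: int
  assumes "1 \<le> t"
  shows "(s + int m * q) div t - (s + (int m - 1) * q) div t
         = q div t + (if m \<in> Hset s t q then 1 else 0)"
proof -
  define a where "a = s + (int m - 1) * q"
  have aq: "s + int m * q = a + q" unfolding a_def by (simp add: algebra_simps)
  have d: "(a + q) div t = a div t + q div t + (a mod t + q mod t) div t"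
    by (rule div_add1_eq)
  have "(s mod t + int m * (q mod t)) mod t = (s + int m * q) mod t"
    by (metis mod_add_left_eq mod_add_right_eq mod_mult_right_eq)
  also have "\<dots> = (a mod t + q mod t) mod t" using aq by (simp add: mod_add_eq)
  finally have hm: "(m \<in> Hset s t q) = ((a mod t + q mod t) mod t < q mod t)"
    unfolding Hset_def by simp
  have "(a mod t + q mod t) div t = (if (a mod t + q mod t) mod t < q mod t then 1 else 0)"
    using assms by (intro small_div) auto
  then have "(a + q) div t - a div t = q div t + (if m \<in> Hset s t q then 1 else 0)"
    using d hm by simp
  then show ?thesis unfolding aq a_def[symmetric] .
qed

lemma half:
  fixes m :: int
  shows "((m + 1) * m) div 2 = (m * (m - 1)) div 2 + m"
proof -
  have "(m + 1) * m = m * (m - 1) + m * 2" by (simp add: algebra_simps)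
  then show ?thesis by simp
qed

lemma lemB:
  fixes s t q :: int
  assumes "1 \<le> t"
  shows "int m * ((s + (int m - 1)*q) div t) - (\<Sum>i\<in>{0..<int m}. (s+i*q) div t)
       = q div t * ((int m * (int m - 1)) div 2) + (\<Sum>k\<in>{k\<in>Hset s t q. k < m}. int k)"
proof (induction m)
  case 0
  then show ?case by simp
next
  case (Suc m)
  let ?c = "\<lambda>i. (s+i*q) div t"
  have r1: "{0..<int (Suc m)} = insert (int m) {0..<int m}" by auto
  have r2: "{k\<in>Hset s t q. k < Suc m} = {k\<in>Hset s t q. k < m} \<union> (if m \<in> Hset s t q then {m} else {})"
    by (auto simp: less_Suc_eq)
  have r3: "(\<Sum>k\<in>{k\<in>Hset s t q. k < Suc m}. int k) = (\<Sum>k\<in>{k\<in>Hset s t q. k < m}. int k) + (if m \<in> Hset s t q then int m else 0)"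
    unfolding r2 by (auto simp: sum.union_disjoint)
  have K: "?c (int m) - ?c (int m - 1) = q div t + (if m \<in> Hset s t q then 1 else 0)"
    using key[OF assms, of s m q] by simp
  have "int (Suc m) * ?c (int (Suc m) - 1) - (\<Sum>i\<in>{0..<int (Suc m)}. ?c i)
      = (int m * ?c (int m - 1) - (\<Sum>i\<in>{0..<int m}. ?c i)) + int m * (?c (int m) - ?c (int m - 1))"
    unfolding r1 by (simp add: algebra_simps)
  also have "\<dots> = q div t * ((int m * (int m - 1)) div 2) + (\<Sum>k\<in>{k\<in>Hset s t q. k < m}. int k)
      + int m * (q div t) + (if m \<in> Hset s t q then int m else 0)"
    using Suc.IH K by (simp add: algebra_simps)
  also have "\<dots> = q div t * ((int (Suc m) * (int (Suc m) - 1)) div 2) + (\<Sum>k\<in>{k\<in>Hset s t q. k < Suc m}. int k)"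
    using half[of "int m"] r3 by (simp add: algebra_simps)
  finally show ?case .
qed



lemma H_shift:
  fixes s t q :: int
  assumes "1 \<le> t"
  shows "(j + U * nat t \<in> Hset s t q) = (j \<in> Hset s t q)"
proof -
  have "int (j + U * nat t) * (q mod t) = int j * (q mod t) + (int U * (q mod t)) * t"
    using assms by (simp add: algebra_simps)
  then have "(s mod t + int (j + U * nat t) * (q mod t)) mod t = (s mod t + int j * (q mod t)) mod t"
    by (simp add: add.assoc[symmetric])
  then show ?thesis unfolding Hset_def by simp
qed

lemma H_mod:
  fixes s t q :: int
  assumes "1 \<le> t"
  shows "(k mod nat t \<in> Hset s t q) = (k \<in> Hset s t q)"
  using H_shift[OF assms, of "k mod nat t" "k div nat t" s q]
  by (metis mod_div_mult_eq)

lemma card_J: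
  fixes s t q :: int
  assumes "1 \<le> t" "gcd t q = 1"
  shows "card (Jset s t q) = nat (q mod t)"
proof -
  define h where "h = q mod t"
  define g where "g = (\<lambda>k::nat. (s mod t + int k * h) mod t)"
  have cop: "coprime t h" unfolding h_def using assms
    by (metis coprime_iff_gcd_eq_1 gcd.commute gcd_red_int)
  have inj: "inj_on g {0..<nat t}"
  proof (rule inj_onI)
    fix a b assume a: "a \<in> {0..<nat t}" and b: "b \<in> {0..<nat t}" and e: "g a = g b"
    have "(s mod t + int a * h) mod t = (s mod t + int b * h) mod t" using e unfolding g_def .
    then have "t dvd (s mod t + int a * h) - (s mod t + int b * h)" by (simp only: mod_eq_dvd_iff)
    then have "t dvd (int a - int b) * h" by (simp add: algebra_simps)
    then have "t dvd int a - int b" using cop by (simp add: coprime_dvd_mult_left_iff)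
    moreover have "\<bar>int a - int b\<bar> < t" using a b assms by auto
    ultimately have "int a - int b = 0"
      using dvd_imp_le_int[of "int a - int b" t] assms by fastforce
    then show "a = b" by simp
  qed
  have sub: "g ` {0..<nat t} \<subseteq> {0..<t}" unfolding g_def using assms by auto
  have cardeq: "card (g ` {0..<nat t}) = card {0..<t}" using card_image[OF inj] by simp
  have img: "g ` {0..<nat t} = {0..<t}" using card_subset_eq[OF _ sub cardeq] by simp
  have J: "Jset s t q = {k\<in>{0..<nat t}. g k < h}"
    unfolding Jset_def Hset_def g_def h_def by auto
  have "g ` Jset s t q = {0..<h}"
  proof
    show "g ` Jset s t q \<subseteq> {0..<h}" unfolding J using sub by fastforce
    show "{0..<h} \<subseteq> g ` Jset s t q"
    proof
      fix y assume y: "y \<in> {0..<h}"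
      have "h < t" unfolding h_def using assms by simp
      then have "y \<in> g ` {0..<nat t}" using img y by auto
      then obtain k where "k \<in> {0..<nat t}" "y = g k" by auto
      then show "y \<in> g ` Jset s t q" unfolding J using y by auto
    qed
  qed
  moreover have "inj_on g (Jset s t q)" using inj J by (auto intro: inj_on_subset)
  ultimately have "card (Jset s t q) = card {0..<h}" by (metis card_image)
  then show ?thesis unfolding h_def by simp
qed



lemma blocks:
  fixes s t q :: int
  assumes "1 \<le> t" "gcd t q = 1"
  shows "(\<Sum>k\<in>{k\<in>Hset s t q. k < U * nat t}. int k)
       = int U * (\<Sum>k\<in>Jset s t q. int k) + (q mod t) * t * (((int U - 1) * int U) div 2)"
proof (induction U)
  case 0
  then show ?case by simp
next
  case (Suc U)
  define T where "T = nat t"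
  have Tt: "int T = t" unfolding T_def using assms by simp
  have im: "{k\<in>Hset s t q. k < Suc U * T} = {k\<in>Hset s t q. k < U * T} \<union> (\<lambda>j. j + U*T) ` Jset s t q"
  proof (intro set_eqI iffI)
    fix k assume k: "k \<in> {k\<in>Hset s t q. k < Suc U * T}"
    show "k \<in> {k\<in>Hset s t q. k < U * T} \<union> (\<lambda>j. j + U*T) ` Jset s t q"
    proof (cases "k < U * T")
      case True then show ?thesis using k by auto
    next
      case False
      then have "k = (k - U*T) + U*T" by simp
      moreover have "k - U*T \<in> Jset s t q" unfolding Jset_def
        using k False H_shift[OF assms(1), of "k - U*T" U s q] by (auto simp: T_def)
      ultimately show ?thesis by blast
    qed
  next
    fix k assume "k \<in> {k\<in>Hset s t q. k < U * T} \<union> (\<lambda>j. j + U*T) ` Jset s t q"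
    then show "k \<in> {k\<in>Hset s t q. k < Suc U * T}"
      using H_shift[OF assms(1), of _ U s q] unfolding Jset_def T_def by auto
  qed
  have disj: "{k\<in>Hset s t q. k < U * T} \<inter> (\<lambda>j. j + U*T) ` Jset s t q = {}" by auto
  have fin: "finite (Jset s t q)" unfolding Jset_def by auto
  have "(\<Sum>k\<in>(\<lambda>j. j + U*T) ` Jset s t q. int k) = (\<Sum>j\<in>Jset s t q. int j + int U * t)"
    by (subst sum.reindex) (auto simp: inj_on_def Tt[symmetric])
  also have "\<dots> = (\<Sum>j\<in>Jset s t q. int j) + int U * t * (q mod t)"
    using card_J[OF assms, of s] assms by (simp add: sum.distrib)
  finally have r: "(\<Sum>k\<in>(\<lambda>j. j + U*T) ` Jset s t q. int k) = (\<Sum>j\<in>Jset s t q. int j) + int U * t * (q mod t)" .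
  have "(\<Sum>k\<in>{k\<in>Hset s t q. k < Suc U * T}. int k)
      = (\<Sum>k\<in>{k\<in>Hset s t q. k < U * T}. int k) + (\<Sum>k\<in>(\<lambda>j. j + U*T) ` Jset s t q. int k)"
    unfolding im by (rule sum.union_disjoint) (use disj fin in auto)
  also have "\<dots> = int U * (\<Sum>k\<in>Jset s t q. int k) + (q mod t) * t * (((int U - 1) * int U) div 2)
      + (\<Sum>j\<in>Jset s t q. int j) + int U * t * (q mod t)"
    using Suc.IH r unfolding T_def by simp
  also have "\<dots> = int (Suc U) * (\<Sum>k\<in>Jset s t q. int k) + (q mod t) * t * (((int (Suc U) - 1) * int (Suc U)) div 2)"
    using half[of "int U"] by (simp add: algebra_simps)
  finally show ?case unfolding T_def .
qed



theorem theorem12: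
  fixes s t q N :: int
  assumes "0 \<le> s" "s < q" "1 \<le> t" "t < q" "N \<ge> 0" "\<not> t dvd q" "gcd t q = 1"
  shows "let qbar = q div t; qhat = q mod t;
             M = - ((s - N * t) div q);
             S = - qbar * (((M - 1) * M) div 2)
                 - M * (N - \<lfloor>(of_int (s + (M - 1) * q) :: real) / of_int t\<rfloor>);
             H = Hset s t q; J = Jset s t q;
             j0 = int (Min J); jlast = int (Max J)
         in (j0 \<ge> M \<longrightarrow> Sminus s t q N = S)
          \<and> (j0 < M \<and> M \<le> jlast \<longrightarrow>
               Sminus s t q N = S - (\<Sum>k\<in>{k\<in>H. int k \<le> M - 1}. int k))
          \<and> (jlast < M \<and> j0 + t \<ge> M \<longrightarrow>
               Sminus s t q N = S - (\<Sum>k\<in>J. int k))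
          \<and> (jlast < M \<and> j0 + t < M \<longrightarrow>
               (let u = (M - 1) div t in
                Sminus s t q N = S - u * (\<Sum>k\<in>J. int k) - qhat * t * (((u - 1) * u) div 2)
                   - (\<Sum>k\<in>{k\<in>H. u * t \<le> int k \<and> int k \<le> M - 1}. int k)))"
proof -
  define M where "M = - ((s - N * t) div q)"
  define S where "S = - (q div t) * (((M - 1) * M) div 2)
                 - M * (N - \<lfloor>(of_int (s + (M - 1) * q) :: real) / of_int t\<rfloor>)"
  define H where "H = Hset s t q"
  define J where "J = Jset s t q"
  define T where "T = nat t"
  have Tt: "int T = t" unfolding T_def using assms by simp
  obtain n where Nn: "N = int n" using assms(5) nonneg_int_cases by blast
  have q0: "q > 0" using assms by simp
  have "(s - N*t) div q \<le> (q - 1) div q"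
    using assms q0 by (intro zdiv_mono1) (auto intro!: add_increasing2 simp: algebra_simps)
  moreover have "(q - 1) div q = 0" using q0 by (simp add: div_pos_pos_trivial)
  ultimately have M0: "M \<ge> 0" unfolding M_def by simp
  obtain m where Mm: "M = int m" using M0 nonneg_int_cases by blast
  let ?c = "\<lambda>i. (s + i*q) div t"
  have A: "Sminus s t q N = - (\<Sum>i\<in>{0..<M}. (N - ?c i))"
    using lemA[OF assms(1-4), of n] unfolding Nn M_def by simp
  have B: "M * ?c (M - 1) - (\<Sum>i\<in>{0..<M}. ?c i)
       = q div t * ((M * (M - 1)) div 2) + (\<Sum>k\<in>{k\<in>H. k < m}. int k)"
    using lemB[OF assms(3), of m s q] unfolding Mm H_def by simp
  have fl: "\<lfloor>(of_int (s + (M - 1) * q) :: real) / of_int t\<rfloor> = ?c (M - 1)"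
    by (rule floor_divide_of_int_eq)
  have setm: "{k\<in>H. k < m} = {k\<in>H. int k \<le> M - 1}" unfolding Mm by auto
  have main: "Sminus s t q N = S - (\<Sum>k\<in>{k\<in>H. int k \<le> M - 1}. int k)"
  proof -
    have "(\<Sum>i\<in>{0..<M}. (N - ?c i)) = M * N - (\<Sum>i\<in>{0..<M}. ?c i)"
      using M0 by (simp add: sum_subtractf)
    then show ?thesis using A B fl setm unfolding S_def by (simp add: algebra_simps)
  qed
  have qh0: "q mod t > 0" using assms
    by (metis dvd_eq_mod_eq_0 less_le pos_mod_sign zero_less_one order_less_le_trans)
  have finJ: "finite J" unfolding J_def Jset_def by auto
  have cardJ: "card J = nat (q mod t)" unfolding J_def using card_J[OF assms(3,7)] .
  have Jne: "J \<noteq> {}" using cardJ qh0 by auto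
  have JH: "J = H \<inter> {0..<T}" unfolding J_def H_def Jset_def T_def ..
  have minle: "\<And>j. j \<in> J \<Longrightarrow> Min J \<le> j" using finJ by simp
  have lemax: "\<And>j. j \<in> J \<Longrightarrow> j \<le> Max J" using finJ by simp
  have T0: "T > 0" using assms unfolding T_def by simp
  have Hmod: "\<And>k. k \<in> H \<Longrightarrow> k mod T \<in> J"
    using H_mod[OF assms(3)] T0 unfolding JH H_def T_def by auto
  have Hge: "\<And>k. k \<in> H \<Longrightarrow> Min J \<le> k"
    using Hmod minle by (meson le_trans mod_less_eq_dividend)
  have JsubH: "J \<subseteq> H" unfolding JH by auto
  have JltT: "\<And>j. j \<in> J \<Longrightarrow> j < T" unfolding JH by auto
  have ca: "int (Min J) \<ge> M \<longrightarrow> Sminus s t q N = S"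
  proof
    assume h: "int (Min J) \<ge> M"
    have e: "{k\<in>H. int k \<le> M - 1} = {}" using Hge h by force
    show "Sminus s t q N = S" using main unfolding e by simp
  qed
  have cb2: "int (Max J) < M \<and> int (Min J) + t \<ge> M \<longrightarrow> Sminus s t q N = S - (\<Sum>k\<in>J. int k)"
  proof
    assume h: "int (Max J) < M \<and> int (Min J) + t \<ge> M"
    have "{k\<in>H. int k \<le> M - 1} = J"
    proof (intro set_eqI iffI)
      fix k assume k: "k \<in> {k\<in>H. int k \<le> M - 1}"
      show "k \<in> J"
      proof (rule ccontr)
        assume "k \<notin> J"
        then have kT: "k \<ge> T" using k unfolding JH by auto
        then have "k mod T \<le> k - T"
          by (metis le_diff_conv2 mod_le_divisor T0 mod_add_self2 le_add_diff_inverse2 mod_less_eq_dividend)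
        moreover have "Min J \<le> k mod T" using Hmod minle k by auto
        ultimately have "int (Min J) \<le> int k - int T" using kT by linarith
        moreover have "int k \<le> M - 1" using k by simp
        ultimately show False using h Tt by linarith
      qed
    next
      fix k assume "k \<in> J"
      then show "k \<in> {k\<in>H. int k \<le> M - 1}" using JsubH lemax h by force
    qed
    then show "Sminus s t q N = S - (\<Sum>k\<in>J. int k)" using main by simp
  qed
  have cb3: "int (Max J) < M \<and> int (Min J) + t < M \<longrightarrow>
               (let u = (M - 1) div t in
                Sminus s t q N = S - u * (\<Sum>k\<in>J. int k) - (q mod t) * t * (((u - 1) * u) div 2)
                   - (\<Sum>k\<in>{k\<in>H. u * t \<le> int k \<and> int k \<le> M - 1}. int k))"
  proof
    assume h: "int (Max J) < M \<and> int (Min J) + t < M"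
    define u where "u = (M - 1) div t"
    have "M - 1 \<ge> 0" using h assms by simp
    then have u0: "u \<ge> 0" unfolding u_def using assms by (simp add: pos_imp_zdiv_nonneg_iff)
    obtain U where Uu: "u = int U" using u0 nonneg_int_cases by blast
    have ut: "u * t \<le> M - 1" unfolding u_def using assms
      by (metis div_mult_mod_eq le_add_same_cancel1 pos_mod_sign zero_less_one order_less_le_trans)
    have UT: "int (U * T) = u * t" using Uu Tt by simp
    have lt: "\<And>x. (x < U*T) = (int x < u*t)" using UT by (metis of_nat_less_iff)
    have sp: "{k\<in>H. int k \<le> M - 1} = {k\<in>H. k < U * T} \<union> {k\<in>H. u * t \<le> int k \<and> int k \<le> M - 1}"
      using ut UT by (auto simp: lt)
    have fin1: "finite {k\<in>H. int k \<le> M - 1}" using Mm by (auto intro: finite_subset[of _ "{..m}"])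
    have "(\<Sum>k\<in>{k\<in>H. int k \<le> M - 1}. int k)
        = (\<Sum>k\<in>{k\<in>H. k < U * T}. int k) + (\<Sum>k\<in>{k\<in>H. u * t \<le> int k \<and> int k \<le> M - 1}. int k)"
      unfolding sp using UT by (intro sum.union_disjoint) (use fin1 sp in \<open>auto simp: lt\<close>)
    moreover have "(\<Sum>k\<in>{k\<in>H. k < U * T}. int k)
       = u * (\<Sum>k\<in>J. int k) + (q mod t) * t * (((u - 1) * u) div 2)"
      using blocks[OF assms(3,7), of s U] unfolding H_def J_def T_def Uu by simp
    ultimately show "let u = (M - 1) div t in
                Sminus s t q N = S - u * (\<Sum>k\<in>J. int k) - (q mod t) * t * (((u - 1) * u) div 2)
                   - (\<Sum>k\<in>{k\<in>H. u * t \<le> int k \<and> int k \<le> M - 1}. int k)"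
      using main unfolding u_def[symmetric] Let_def by simp
  qed
  show ?thesis
    unfolding Let_def M_def[symmetric] S_def[symmetric] H_def[symmetric] J_def[symmetric]
    using ca main cb2 cb3 unfolding Let_def by blast
qed


end
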